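(* Let $\gamma\in[0,1)$. For a bounded function $U:\mathbb{R}^n\to\mathbb{R}$ define the Bellman backup $$B[U](x)=\min\Big\{c(x),\ \max\big\{r(x),\ \gamma\max_{u\in\mathcal{U}}\min_{d\in\mathcal{D}} U(f(x,u,d))\big\}\Big\}.$$ Then the value function $V$ defined in the context is the unique (bounded) solution of $V=B[V]$, and for all bounded functions $V_1,V_2:\mathbb{R}^n\to\mathbb{R}$, $\|B[V_1]-B[V_2]\|_\infty\le\gamma\|V_1-V_2\|_\infty$.
   Context: Setting: States $x\in\mathbb{R}^n$; compact sets $\mathcal{U}\subseteq\mathbb{R}^m$ (controls) and $\mathcal{D}\subseteq\mathbb{R}^\ell$ (disturbances); dynamics $f:\mathbb{R}^n\times\mathcal{U}\times\mathcal{D}\to\mathbb{R}^n$, Lipschitz continuous in the state. For sequences $\mathbf{u}=\{u_t\}_{t\ge0}\subset\mathcal{U}$, $\mathbf{d}=\{d_t\}_{t\ge0}\subset\mathcal{D}$, the trajectory is $\xi_x^{\mathbf{u},\mathbf{d}}(0)=x$, $\xi_x^{\mathbf{u},\mathbf{d}}(t+1)=f(\xi_x^{\mathbf{u},\mathbf{d}}(t),u_t,d_t)$ for $t\in\mathbb{Z}_+$. Let $r,c:\mathbb{R}^n\to\mathbb{R}$ be bounded Lipschitz continuous functions. A map $\phi$ from control sequences to disturbance sequences is a non-anticipative strategy if whenever $u_t=\bar u_t$ for all $t\in\{0,\dots,T\}$, then $\phi(\mathbf{u})_t=\phi(\bar{\mathbf{u}})_t$ for all $t\in\{0,\dots,T\}$;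 $\Phi$ is the set of all such strategies. Value function: $$V(x)=\inf_{\phi\in\Phi}\ \sup_{\mathbf{u}}\ \sup_{t\in\mathbb{Z}_+}\ \min\Big\{\gamma^t r\big(\xi_x^{\mathbf{u},\phi(\mathbf{u})}(t)\big),\ \min_{\tau=0,\dots,t}\gamma^\tau c\big(\xi_x^{\mathbf{u},\phi(\mathbf{u})}(\tau)\big)\Big\}$$ (the paper writes $\max_{\mathbf{u}}$ over control sequences). $\|\cdot\|_\infty$ is the supremum norm over $\mathbb{R}^n$. *)

theory Defs
  imports "HOL-Analysis.Analysis"
begin

fun traj :: "('x \<Rightarrow> 'u \<Rightarrow> 'd \<Rightarrow> 'x) \<Rightarrow> 'x \<Rightarrow> (nat \<Rightarrow> 'u) \<Rightarrow> (nat \<Rightarrow> 'd) \<Rightarrow> nat \<Rightarrow> 'x" where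
  "traj f x u d 0 = x"
| "traj f x u d (Suc t) = f (traj f x u d t) (u t) (d t)"

definition seqs :: "'a set \<Rightarrow> (nat \<Rightarrow> 'a) set" where
  "seqs A = {s. \<forall>t. s t \<in> A}"

definition nonanticipative :: "'u set \<Rightarrow> 'd set \<Rightarrow> ((nat \<Rightarrow> 'u) \<Rightarrow> (nat \<Rightarrow> 'd)) set" where
  "nonanticipative U D = {\<phi>.
     (\<forall>u \<in> seqs U. \<phi> u \<in> seqs D) \<and>
     (\<forall>u \<in> seqs U. \<forall>ub \<in> seqs U. \<forall>T::nat.
        (\<forall>t\<le>T. u t = ub t) \<longrightarrow> (\<forall>t\<le>T. \<phi> u t = \<phi> ub t))}"

definition value_fun ::
  "('x \<Rightarrow> 'u \<Rightarrow> 'd \<Rightarrow> 'x) \<Rightarrow> 'u set \<Rightarrow> 'd set \<Rightarrow> real \<Rightarrow> ('x \<Rightarrow> real) \<Rightarrow> ('x \<Rightarrow> real) \<Rightarrow> 'x \<Rightarrow> real" where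
  "value_fun f U D \<gamma> r c x =
     (INF \<phi> \<in> nonanticipative U D. SUP u \<in> seqs U. SUP t. 
        min (\<gamma> ^ t * r (traj f x u (\<phi> u) t))
            (Min ((\<lambda>\<tau>. \<gamma> ^ \<tau> * c (traj f x u (\<phi> u) \<tau>)) ` {..t})))"

text \<open>Bellman backup; max over u / min over d rendered as SUP / INF.\<close>
definition bellman ::
  "('x \<Rightarrow> 'u \<Rightarrow> 'd \<Rightarrow> 'x) \<Rightarrow> 'u set \<Rightarrow> 'd set \<Rightarrow> real \<Rightarrow> ('x \<Rightarrow> real) \<Rightarrow> ('x \<Rightarrow> real) \<Rightarrow> ('x \<Rightarrow> real) \<Rightarrow> 'x \<Rightarrow> real" where
  "bellman f U D \<gamma> r c W x =
     min (c x) (max (r x) (\<gamma> * (SUP u \<in> U. INF d \<in> D. W (f x u d))))"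

definition supnorm :: "('x \<Rightarrow> real) \<Rightarrow> real" where
  "supnorm g = (SUP x. \<bar>g x\<bar>)"

end

theory Submission
  imports Defs
begin


fun cmin :: "(nat \<Rightarrow> real) \<Rightarrow> nat \<Rightarrow> real" where
  "cmin g 0 = g 0"
| "cmin g (Suc t) = min (cmin g t) (g (Suc t))"

lemma Min_cmin: "Min (g ` {..t}) = cmin g t"
proof (induction t)
  case 0 then show ?case by simp
next
  case (Suc t)
  have "Min (g ` {..Suc t}) = Min (insert (g (Suc t)) (g ` {..t}))"
    by (simp add: atMost_Suc)
  also have "\<dots> = min (g (Suc t)) (Min (g ` {..t}))"
    by (rule Min_insert) auto
  finally show ?case using Suc by (simp add: min.commute)
qed

lemma cmin_Suc_shift: "cmin g (Suc t) = min (g 0) (cmin (\<lambda>s. g (Suc s)) t)"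
  by (induction t) (auto simp: min.assoc)

lemma cmin_mult: "0 \<le> a \<Longrightarrow> a * cmin g t = cmin (\<lambda>s. a * g s) t"
  by (induction t) (auto simp: min_mult_distrib_left)

lemma cmin_bound: "(\<And>s. \<bar>g s\<bar> \<le> M) \<Longrightarrow> \<bar>cmin g t\<bar> \<le> M"
  by (induction t) (auto simp: abs_le_iff min_def)

lemma traj_shift:
  "traj f x u d (Suc t) = traj f (f x (u 0) (d 0)) (\<lambda>s. u (Suc s)) (\<lambda>s. d (Suc s)) t"
  by (induction t) auto

definition shift :: "(nat \<Rightarrow> 'a) \<Rightarrow> nat \<Rightarrow> 'a" where
  "shift s = (\<lambda>n. s (Suc n))"

definition scons :: "'a \<Rightarrow> (nat \<Rightarrow> 'a) \<Rightarrow> nat \<Rightarrow> 'a" where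
  "scons a s = (\<lambda>n. case n of 0 \<Rightarrow> a | Suc m \<Rightarrow> s m)"

lemma shift_scons[simp]: "shift (scons a s) = s"
  by (simp add: shift_def scons_def)
lemma scons_0[simp]: "scons a s 0 = a"
  by (simp add: scons_def)
lemma scons_Suc[simp]: "scons a s (Suc n) = s n"
  by (simp add: scons_def)

definition pay where
  "pay f \<gamma> r c x u d t = min (\<gamma>^t * r (traj f x u d t)) (cmin (\<lambda>\<tau>. \<gamma>^\<tau> * c (traj f x u d \<tau>)) t)"

definition Jf where
  "Jf f \<gamma> r c x u d = (SUP t. pay f \<gamma> r c x u d t)"

lemma pay_0: "pay f \<gamma> r c x u d 0 = min (r x) (c x)"
  by (simp add: pay_def)

lemma pay_Suc:
  assumes "0 \<le> \<gamma>"
  shows "pay f \<gamma> r c x u d (Suc t) =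
    min (c x) (\<gamma> * pay f \<gamma> r c (f x (u 0) (d 0)) (shift u) (shift d) t)"
proof -
  let ?y = "f x (u 0) (d 0)"
  have e: "cmin (\<lambda>\<tau>. \<gamma>^\<tau> * c (traj f x u d \<tau>)) (Suc t)
     = min (c x) (\<gamma> * cmin (\<lambda>\<tau>. \<gamma>^\<tau> * c (traj f ?y (shift u) (shift d) \<tau>)) t)"
    by (simp only: cmin_Suc_shift cmin_mult[OF assms] traj_shift shift_def)
       (simp add: mult.assoc)
  show ?thesis
    unfolding pay_def e traj_shift shift_def
    by (simp del: traj.simps add: min_mult_distrib_left assms mult.assoc min.left_commute)
qed

lemma pay_bound:
  assumes "0 \<le> \<gamma>" "\<gamma> \<le> 1" "\<And>y. \<bar>r y\<bar> \<le> M" "\<And>y. \<bar>c y\<bar> \<le> M"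
  shows "\<bar>pay f \<gamma> r c x u d t\<bar> \<le> M"
proof -
  have g: "\<bar>\<gamma>^s * z\<bar> \<le> M" if "\<bar>z\<bar> \<le> M" for s z
  proof -
    have "\<bar>\<gamma>^s\<bar> \<le> 1" using assms by (simp add: power_le_one)
    then have "\<bar>\<gamma>^s\<bar> * \<bar>z\<bar> \<le> 1 * M"
      by (intro mult_mono) (use that in auto)
    then show ?thesis by (simp add: abs_mult)
  qed
  have "\<bar>cmin (\<lambda>\<tau>. \<gamma>^\<tau> * c (traj f x u d \<tau>)) t\<bar> \<le> M"
    by (rule cmin_bound) (rule g[OF assms(4)])
  moreover have "\<bar>\<gamma>^t * r (traj f x u d t)\<bar> \<le> M" by (rule g[OF assms(3)])
  ultimately show ?thesis unfolding pay_def by (auto simp: abs_le_iff min_def)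
qed



lemma SUP_nat_split:
  fixes P :: "nat \<Rightarrow> real"
  assumes "bdd_above (range P)"
  shows "(SUP t. P t) = max (P 0) (SUP t. P (Suc t))"
proof -
  have b2: "bdd_above (range (\<lambda>t. P (Suc t)))"
    using assms by (rule bdd_above_mono) auto
  show ?thesis
  proof (rule antisym)
    show "(SUP t. P t) \<le> max (P 0) (SUP t. P (Suc t))"
    proof (rule cSUP_least)
      fix t show "P t \<le> max (P 0) (SUP t. P (Suc t))"
      proof (cases t)
        case (Suc s)
        have "P (Suc s) \<le> (SUP t. P (Suc t))" by (rule cSUP_upper[OF _ b2]) auto
        then show ?thesis using Suc by simp
      qed simp
    qed simp
  next
    have "P 0 \<le> (SUP t. P t)" by (rule cSUP_upper[OF _ assms]) auto
    moreover have "(SUP t. P (Suc t)) \<le> (SUP t. P t)"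
      by (rule cSUP_least) (auto intro: cSUP_upper[OF _ assms])
    ultimately show "max (P 0) (SUP t. P (Suc t)) \<le> (SUP t. P t)" by simp
  qed
qed

definition G :: "real \<Rightarrow> ('x \<Rightarrow> real) \<Rightarrow> ('x \<Rightarrow> real) \<Rightarrow> 'x \<Rightarrow> real \<Rightarrow> real" where
  "G \<gamma> r c x s = min (c x) (max (r x) (\<gamma> * s))"

lemma G_mono: "0 \<le> \<gamma> \<Longrightarrow> mono (G \<gamma> r c x)"
  unfolding mono_def G_def
proof (intro allI impI)
  fix a b :: real assume "0 \<le> \<gamma>" "a \<le> b"
  then have "\<gamma> * a \<le> \<gamma> * b" by (simp add: mult_left_mono)
  then show "min (c x) (max (r x) (\<gamma> * a)) \<le> min (c x) (max (r x) (\<gamma> * b))"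
    by (auto simp: min_def max_def)
qed

lemma G_cont: "continuous (at p within A) (G \<gamma> r c x)"
  unfolding G_def by (intro continuous_intros)

lemma G_lip: "0 \<le> \<gamma> \<Longrightarrow> \<bar>G \<gamma> r c x p - G \<gamma> r c x q\<bar> \<le> \<gamma> * \<bar>p - q\<bar>"
proof -
  assume g: "0 \<le> \<gamma>"
  have "\<bar>G \<gamma> r c x p - G \<gamma> r c x q\<bar> \<le> \<bar>\<gamma> * p - \<gamma> * q\<bar>"
    unfolding G_def by (auto simp: min_def max_def abs_if)
  also have "\<dots> = \<gamma> * \<bar>p - q\<bar>" using g by (simp add: abs_mult right_diff_distrib[symmetric])
  finally show ?thesis .
qed

locale game =
  fixes f :: "'x \<Rightarrow> 'u \<Rightarrow> 'd \<Rightarrow> 'x" and U :: "'u set" and D :: "'d set"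
    and \<gamma> :: real and r c :: "'x \<Rightarrow> real" and M :: real
  assumes Une: "U \<noteq> {}" and Dne: "D \<noteq> {}" and g0: "0 \<le> \<gamma>" and g1: "\<gamma> < 1"
    and rb: "\<And>y. \<bar>r y\<bar> \<le> M" and cb: "\<And>y. \<bar>c y\<bar> \<le> M"
begin

abbreviation "J \<equiv> Jf f \<gamma> r c"
abbreviation "NA \<equiv> nonanticipative U D"
abbreviation "S \<equiv> seqs U"
abbreviation "V \<equiv> value_fun f U D \<gamma> r c"
abbreviation "GG \<equiv> G \<gamma> r c"

lemma payb: "\<bar>pay f \<gamma> r c x u d t\<bar> \<le> M"
  using pay_bound[OF g0 _ rb cb] g1 by simp

lemma pay_bdd: "bdd_above (range (pay f \<gamma> r c x u d))"
  by (rule bdd_aboveI2[where M=M]) (use payb in \<open>auto simp: abs_le_iff\<close>)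

lemma Jb: "\<bar>J x u d\<bar> \<le> M"
proof -
  have "J x u d \<le> M" unfolding Jf_def
    by (rule cSUP_least) (use payb in \<open>auto simp: abs_le_iff\<close>)
  moreover have "pay f \<gamma> r c x u d 0 \<le> J x u d" unfolding Jf_def
    by (rule cSUP_upper[OF _ pay_bdd]) auto
  ultimately show ?thesis using payb[of x u d 0] by (auto simp: abs_le_iff)
qed

lemma J_decomp: "J x u d = GG x (J (f x (u 0) (d 0)) (shift u) (shift d))"
proof -
  let ?y = "f x (u 0) (d 0)"
  let ?Q = "pay f \<gamma> r c ?y (shift u) (shift d)"
  have "J x u d = max (min (r x) (c x)) (SUP t. min (c x) (\<gamma> * ?Q t))"
    unfolding Jf_def by (simp add: SUP_nat_split[OF pay_bdd] pay_0 pay_Suc[OF g0])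
  also have "(SUP t. min (c x) (\<gamma> * ?Q t)) = min (c x) (\<gamma> * Sup (range ?Q))"
  proof -
    have m: "mono (\<lambda>s. min (c x) (\<gamma> * s))"
      unfolding mono_def
    proof (intro allI impI)
      fix a b :: real assume "a \<le> b"
      then have "\<gamma> * a \<le> \<gamma> * b" by (rule mult_left_mono[OF _ g0])
      then show "min (c x) (\<gamma> * a) \<le> min (c x) (\<gamma> * b)" by (auto simp: min_def)
    qed
    have "(\<lambda>s. min (c x) (\<gamma> * s)) (Sup (range ?Q)) = (SUP s\<in>range ?Q. min (c x) (\<gamma> * s))"
      by (rule continuous_at_Sup_mono[OF m]) (auto intro!: continuous_intros pay_bdd)
    then show ?thesis by (simp add: image_image)
  qed
  finally show ?thesis unfolding G_def Jf_def by (auto simp: min_def max_def)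
qed

lemma S_ne: "u0 \<in> U \<Longrightarrow> (\<lambda>t. u0) \<in> S" by (simp add: seqs_def)
lemma NA_ne: "d0 \<in> D \<Longrightarrow> (\<lambda>u t. d0) \<in> NA" by (simp add: nonanticipative_def seqs_def)
lemma S_ne': "S \<noteq> {}" using Une S_ne by blast
lemma NA_ne': "NA \<noteq> {}" using Dne NA_ne by blast

lemma V_alt: "V x = (INF \<phi>\<in>NA. SUP u\<in>S. J x u (\<phi> u))"
  unfolding value_fun_def Jf_def pay_def Min_cmin by simp

lemma SUPJ_b: "\<bar>SUP u\<in>S. J y u (\<psi> u)\<bar> \<le> M"
proof -
  obtain u0 where "u0 \<in> S" using S_ne' by blast
  have bd: "bdd_above ((\<lambda>u. J y u (\<psi> u)) ` S)"
    by (rule bdd_aboveI2[where M=M]) (use Jb in \<open>auto simp: abs_le_iff\<close>)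
  have "(SUP u\<in>S. J y u (\<psi> u)) \<le> M"
    by (rule cSUP_least[OF S_ne']) (use Jb in \<open>auto simp: abs_le_iff\<close>)
  moreover have "J y u0 (\<psi> u0) \<le> (SUP u\<in>S. J y u (\<psi> u))"
    by (rule cSUP_upper[OF \<open>u0 \<in> S\<close> bd])
  ultimately show ?thesis using Jb[of y u0 "\<psi> u0"] by (auto simp: abs_le_iff)
qed

lemma SUPJ_lo: "-M \<le> (SUP u\<in>S. J y u (\<psi> u))" using SUPJ_b[of y \<psi>] by (simp add: abs_le_iff)
lemma SUPJ_hi: "(SUP u\<in>S. J y u (\<psi> u)) \<le> M" using SUPJ_b[of y \<psi>] by (simp add: abs_le_iff)

lemma SUPJ_bdd: "bdd_below ((\<lambda>\<psi>. SUP u\<in>S. J y u (\<psi> u)) ` A)"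
  by (rule bdd_belowI2[where m="-M"]) (rule SUPJ_lo)

lemma Vb: "\<bar>V y\<bar> \<le> M"
proof -
  obtain p where "p \<in> NA" using NA_ne' by blast
  have "V y \<ge> -M" unfolding V_alt
    by (rule cINF_greatest[OF NA_ne']) (rule SUPJ_lo)
  moreover have "V y \<le> (SUP u\<in>S. J y u (p u))" unfolding V_alt
    by (rule cINF_lower[OF SUPJ_bdd \<open>p \<in> NA\<close>])
  ultimately show ?thesis using SUPJ_b[of y p] by (auto simp: abs_le_iff)
qed

end


context game begin

lemma Vlo: "-M \<le> V y" using Vb[of y] by (simp add: abs_le_iff)
lemma Vhi: "V y \<le> M" using Vb[of y] by (simp add: abs_le_iff)

lemma INFV_lo: "-M \<le> (INF d\<in>D. V (f x u0 d))"
  by (rule cINF_greatest[OF Dne]) (rule Vlo)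
lemma INFV_hi: "(INF d\<in>D. V (f x u0 d)) \<le> M"
proof -
  obtain d where "d \<in> D" using Dne by blast
  have "(INF d\<in>D. V (f x u0 d)) \<le> V (f x u0 d)"
    by (rule cINF_lower[OF _ \<open>d \<in> D\<close>]) (rule bdd_belowI2[where m="-M"], rule Vlo)
  then show ?thesis using Vhi[of "f x u0 d"] by simp
qed

lemma seqs_shift: "u \<in> S \<Longrightarrow> shift u \<in> S" by (simp add: seqs_def shift_def)
lemma seqs_scons: "a \<in> U \<Longrightarrow> u \<in> S \<Longrightarrow> scons a u \<in> S"
  by (auto simp: seqs_def scons_def split: nat.splits)

lemma NA_D: "\<phi> \<in> NA \<Longrightarrow> u \<in> S \<Longrightarrow> \<phi> u t \<in> D"
  unfolding nonanticipative_def seqs_def by blast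
lemma NA_ag: "\<phi> \<in> NA \<Longrightarrow> u \<in> S \<Longrightarrow> ub \<in> S \<Longrightarrow> \<forall>t\<le>T. u t = ub t \<Longrightarrow> t \<le> T \<Longrightarrow> \<phi> u t = \<phi> ub t"
  unfolding nonanticipative_def by blast

lemma Jbdd: "bdd_above ((\<lambda>u. J y u (\<psi> u)) ` A)"
  by (rule bdd_aboveI2[where M=M]) (use Jb in \<open>simp add: abs_le_iff\<close>)

lemma key:
  "(INF \<phi>\<in>NA. SUP u\<in>S. J (f x (u 0) (\<phi> u 0)) (shift u) (shift (\<phi> u)))
   = (SUP u0\<in>U. INF d\<in>D. V (f x u0 d))"
  (is "(INF \<phi>\<in>NA. ?A \<phi>) = ?R")
proof -
  define K where "K u d = J (f x (u 0) (d 0)) (shift u) (shift d)" for u d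
  have A_eq: "?A \<phi> = (SUP u\<in>S. K u (\<phi> u))" for \<phi> by (simp add: K_def)
  have Kb: "\<bar>K u d\<bar> \<le> M" for u d unfolding K_def by (rule Jb)
  have Kbdd: "bdd_above ((\<lambda>u. K u (\<phi> u)) ` S)" for \<phi>
    by (rule bdd_aboveI2[where M=M]) (use Kb in \<open>auto simp: abs_le_iff\<close>)
  have Alo: "-M \<le> ?A \<phi>" for \<phi>
  proof -
    obtain u where "u \<in> S" using S_ne' by blast
    have "K u (\<phi> u) \<le> ?A \<phi>" unfolding A_eq by (rule cSUP_upper[OF \<open>u \<in> S\<close> Kbdd])
    then show ?thesis using Kb[of u "\<phi> u"] by (simp add: abs_le_iff)
  qed
  have Abdd: "bdd_below (?A ` NA)" by (rule bdd_belowI2[where m="-M"]) (rule Alo)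
  have Rbdd: "bdd_above ((\<lambda>u0. INF d\<in>D. V (f x u0 d)) ` U)"
    by (rule bdd_aboveI2[where M=M]) (rule INFV_hi)
  have Vbdd: "bdd_below ((\<lambda>d. V (f x u0 d)) ` D)" for u0
    by (rule bdd_belowI2[where m="-M"]) (rule Vlo)
  show ?thesis
  proof (rule antisym)
    show "(INF \<phi>\<in>NA. ?A \<phi>) \<le> ?R"
    proof (rule field_le_epsilon)
      fix e :: real assume e: "0 < e"
      have "\<forall>u0\<in>U. \<exists>d. d \<in> D \<and> V (f x u0 d) < ?R + e"
      proof
        fix u0 assume "u0 \<in> U"
        have "(INF d\<in>D. V (f x u0 d)) \<le> ?R" by (rule cSUP_upper[OF \<open>u0 \<in> U\<close> Rbdd])
        then have "(INF d\<in>D. V (f x u0 d)) < ?R + e" using e by simp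
        then show "\<exists>d. d \<in> D \<and> V (f x u0 d) < ?R + e"
          using cINF_less_iff[OF Dne Vbdd] by blast
      qed
      from bchoice[OF this] obtain dd where dd: "\<And>u0. u0 \<in> U \<Longrightarrow> dd u0 \<in> D \<and> V (f x u0 (dd u0)) < ?R + e"
        by blast
      have "\<forall>u0\<in>U. \<exists>\<psi>. \<psi> \<in> NA \<and> (SUP u\<in>S. J (f x u0 (dd u0)) u (\<psi> u)) < ?R + e"
      proof
        fix u0 assume "u0 \<in> U"
        then have "V (f x u0 (dd u0)) < ?R + e" using dd by blast
        then show "\<exists>\<psi>. \<psi> \<in> NA \<and> (SUP u\<in>S. J (f x u0 (dd u0)) u (\<psi> u)) < ?R + e"
          unfolding V_alt using cINF_less_iff[OF NA_ne' SUPJ_bdd] by blast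
      qed
      from bchoice[OF this] obtain pp where pp: "\<And>u0. u0 \<in> U \<Longrightarrow> pp u0 \<in> NA \<and>
          (SUP u\<in>S. J (f x u0 (dd u0)) u (pp u0 u)) < ?R + e"
        by blast
      define \<phi> where "\<phi> u = scons (dd (u 0)) (pp (u 0) (shift u))" for u
      have phiNA: "\<phi> \<in> NA"
        unfolding nonanticipative_def
      proof (intro CollectI conjI ballI allI impI)
        fix u assume u: "u \<in> S"
        then have u0: "u 0 \<in> U" by (simp add: seqs_def)
        have "pp (u 0) (shift u) t \<in> D" for t
          using pp[OF u0] seqs_shift[OF u] NA_D by blast
        then show "\<phi> u \<in> seqs D" using dd[OF u0]
          by (auto simp: \<phi>_def seqs_def scons_def split: nat.splits)
      next
        fix u ub T t assume u: "u \<in> S" and ub: "ub \<in> S" and ag: "\<forall>t\<le>T. u t = ub t" and t: "t \<le> T"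
        have e0: "u 0 = ub 0" using ag by simp
        show "\<phi> u t = \<phi> ub t"
        proof (cases t)
          case 0 then show ?thesis by (simp add: \<phi>_def e0)
        next
          case (Suc s)
          have u0: "u 0 \<in> U" using u by (simp add: seqs_def)
          have ag': "\<forall>t\<le>T - 1. shift u t = shift ub t" using ag Suc t
            by (auto simp: shift_def)
          have "s \<le> T - 1" using Suc t by simp
          then have "pp (u 0) (shift u) s = pp (u 0) (shift ub) s"
            using NA_ag[OF conjunct1[OF pp[OF u0]] seqs_shift[OF u] seqs_shift[OF ub] ag'] by blast
          then show ?thesis by (simp add: \<phi>_def e0 Suc)
        qed
      qed
      have "(INF \<phi>\<in>NA. ?A \<phi>) \<le> ?A \<phi>" by (rule cINF_lower[OF Abdd phiNA])
      also have "?A \<phi> \<le> ?R + e" unfolding A_eq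
      proof (rule cSUP_least[OF S_ne'])
        fix u assume u: "u \<in> S"
        then have u0: "u 0 \<in> U" by (simp add: seqs_def)
        have "K u (\<phi> u) = J (f x (u 0) (dd (u 0))) (shift u) (pp (u 0) (shift u))"
          by (simp add: K_def \<phi>_def)
        also have "\<dots> \<le> (SUP u'\<in>S. J (f x (u 0) (dd (u 0))) u' (pp (u 0) u'))"
          by (rule cSUP_upper[OF seqs_shift[OF u]])
             (rule Jbdd)
        also have "\<dots> \<le> ?R + e" using pp[OF u0] by simp
        finally show "K u (\<phi> u) \<le> ?R + e" .
      qed
      finally show "(INF \<phi>\<in>NA. ?A \<phi>) \<le> ?R + e" .
    qed
  next
    show "?R \<le> (INF \<phi>\<in>NA. ?A \<phi>)"
    proof (rule cINF_greatest[OF NA_ne'])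
      fix \<phi> assume phi: "\<phi> \<in> NA"
      show "?R \<le> ?A \<phi>"
      proof (rule cSUP_least[OF Une])
        fix u0 assume u0: "u0 \<in> U"
        define ub where "ub = scons u0 (\<lambda>t. u0)"
        have ubS: "ub \<in> S" unfolding ub_def by (rule seqs_scons[OF u0 S_ne[OF u0]])
        define d0 where "d0 = \<phi> ub 0"
        have d0D: "d0 \<in> D" unfolding d0_def by (rule NA_D[OF phi ubS])
        define \<phi>' where "\<phi>' u' = shift (\<phi> (scons u0 u'))" for u'
        have same0: "\<phi> (scons u0 u') 0 = d0" if "u' \<in> S" for u'
        proof -
          have s: "scons u0 u' \<in> S" by (rule seqs_scons[OF u0 that])
          have "\<forall>t\<le>0. scons u0 u' t = ub t" by (simp add: ub_def)
          from NA_ag[OF phi s ubS this] show ?thesis by (simp add: d0_def)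
        qed
        have phi': "\<phi>' \<in> NA"
          unfolding nonanticipative_def
        proof (intro CollectI conjI ballI allI impI)
          fix u assume "u \<in> S"
          then have "scons u0 u \<in> S" by (rule seqs_scons[OF u0])
          then show "\<phi>' u \<in> seqs D" using NA_D[OF phi]
            by (simp add: \<phi>'_def seqs_def shift_def)
        next
          fix u ub' T t assume u: "u \<in> S" and ub: "ub' \<in> S" and ag: "\<forall>t\<le>T. u t = ub' t" and t: "t \<le> T"
          have s1: "scons u0 u \<in> S" "scons u0 ub' \<in> S" using seqs_scons[OF u0] u ub by auto
          have ag': "\<forall>t\<le>Suc T. scons u0 u t = scons u0 ub' t"
            using ag by (auto simp: scons_def split: nat.splits)
          have "\<phi> (scons u0 u) (Suc t) = \<phi> (scons u0 ub') (Suc t)"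
            using NA_ag[OF phi s1 ag'] t by simp
          then show "\<phi>' u t = \<phi>' ub' t" by (simp add: \<phi>'_def shift_def)
        qed
        have "(INF d\<in>D. V (f x u0 d)) \<le> V (f x u0 d0)" by (rule cINF_lower[OF Vbdd d0D])
        also have "V (f x u0 d0) \<le> (SUP u'\<in>S. J (f x u0 d0) u' (\<phi>' u'))"
          unfolding V_alt by (rule cINF_lower[OF SUPJ_bdd phi'])
        also have "\<dots> \<le> ?A \<phi>"
        proof (rule cSUP_least[OF S_ne'])
          fix u' assume u': "u' \<in> S"
          have "J (f x u0 d0) u' (\<phi>' u') = K (scons u0 u') (\<phi> (scons u0 u'))"
            by (simp add: K_def \<phi>'_def same0[OF u'])
          also have "\<dots> \<le> ?A \<phi>" unfolding A_eq
            by (rule cSUP_upper[OF seqs_scons[OF u0 u'] Kbdd])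
          finally show "J (f x u0 d0) u' (\<phi>' u') \<le> ?A \<phi>" .
        qed
        finally show "(INF d\<in>D. V (f x u0 d)) \<le> ?A \<phi>" .
      qed
    qed
  qed
qed

end


context game begin

lemma V_fix: "V x = bellman f U D \<gamma> r c V x"
proof -
  define K where "K \<phi> u = J (f x (u 0) (\<phi> u 0)) (shift u) (shift (\<phi> u))" for \<phi> u
  define A where "A \<phi> = (SUP u\<in>S. K \<phi> u)" for \<phi>
  have Kb: "\<bar>K \<phi> u\<bar> \<le> M" for \<phi> u unfolding K_def by (rule Jb)
  have Kbdd: "bdd_above (K \<phi> ` S)" for \<phi>
    by (rule bdd_aboveI2[where M=M]) (use Kb in \<open>auto simp: abs_le_iff\<close>)
  have Alo: "-M \<le> A \<phi>" for \<phi>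
  proof -
    obtain u where "u \<in> S" using S_ne' by blast
    have "K \<phi> u \<le> A \<phi>" unfolding A_def by (rule cSUP_upper[OF \<open>u \<in> S\<close> Kbdd])
    then show ?thesis using Kb[of \<phi> u] by (simp add: abs_le_iff)
  qed
  have Abdd: "bdd_below (A ` NA)" by (rule bdd_belowI2[where m="-M"]) (rule Alo)
  have "V x = (INF \<phi>\<in>NA. SUP u\<in>S. GG x (K \<phi> u))"
    unfolding V_alt K_def by (subst J_decomp) (rule refl)
  also have "\<dots> = (INF \<phi>\<in>NA. GG x (A \<phi>))"
  proof (rule INF_cong[OF refl])
    fix \<phi>
    have "GG x (Sup (K \<phi> ` S)) = (SUP s\<in>K \<phi> ` S. GG x s)"
      by (rule continuous_at_Sup_mono[OF G_mono[OF g0] G_cont]) (use S_ne' Kbdd in auto)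
    then show "(SUP u\<in>S. GG x (K \<phi> u)) = GG x (A \<phi>)"
      by (simp add: A_def image_image)
  qed
  also have "\<dots> = GG x (INF \<phi>\<in>NA. A \<phi>)"
  proof -
    have "GG x (Inf (A ` NA)) = (INF s\<in>A ` NA. GG x s)"
      by (rule continuous_at_Inf_mono[OF G_mono[OF g0] G_cont]) (use NA_ne' Abdd in auto)
    then show ?thesis by (simp add: image_image)
  qed
  also have "(INF \<phi>\<in>NA. A \<phi>) = (SUP u0\<in>U. INF d\<in>D. V (f x u0 d))"
    unfolding A_def K_def by (rule key)
  finally show ?thesis by (simp add: bellman_def G_def)
qed

end

lemma abs_lo: "\<bar>a::real\<bar> \<le> B \<Longrightarrow> -B \<le> a" by simp
lemma abs_hi: "\<bar>a::real\<bar> \<le> B \<Longrightarrow> a \<le> B" by simp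

lemma bnd_abs: "bounded (range (W :: 'a \<Rightarrow> real)) \<Longrightarrow> \<exists>B. \<forall>y. \<bar>W y\<bar> \<le> B"
  unfolding bounded_iff by auto

lemma supnorm_ge: "bounded (range (W :: 'a \<Rightarrow> real)) \<Longrightarrow> \<bar>W y\<bar> \<le> supnorm W"
proof -
  assume "bounded (range W)"
  then obtain B where B: "\<And>y. \<bar>W y\<bar> \<le> B" using bnd_abs by blast
  show ?thesis unfolding supnorm_def
    by (rule cSUP_upper) (auto intro!: bdd_aboveI2[where M=B] B)
qed

lemma bounded_diff_fun: "bounded (range (V1 :: 'a \<Rightarrow> real)) \<Longrightarrow> bounded (range V2) \<Longrightarrow> bounded (range (\<lambda>x. V1 x - V2 x))"
proof -
  assume "bounded (range V1)" "bounded (range V2)"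
  then obtain B1 B2 where "\<And>y. \<bar>V1 y\<bar> \<le> B1" "\<And>y. \<bar>V2 y\<bar> \<le> B2" using bnd_abs by metis
  then have "\<forall>y\<in>range (\<lambda>x. V1 x - V2 x). norm y \<le> B1 + B2"
    by (auto intro: order_trans[OF abs_triangle_ineq4] add_mono)
  then show ?thesis unfolding bounded_iff by blast
qed

lemma contraction:
  fixes V1 V2 :: "'x \<Rightarrow> real" and f :: "'x \<Rightarrow> 'u \<Rightarrow> 'd \<Rightarrow> 'x" and U :: "'u set" and D :: "'d set"
  assumes Une: "U \<noteq> {}" and Dne: "D \<noteq> {}" and g0: "0 \<le> \<gamma>"
    and b1: "bounded (range V1)" and b2: "bounded (range V2)"
  shows "supnorm (\<lambda>x. bellman f U D \<gamma> r c V1 x - bellman f U D \<gamma> r c V2 x)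
           \<le> \<gamma> * supnorm (\<lambda>x. V1 x - V2 x)"
proof -
  define N where "N = supnorm (\<lambda>x. V1 x - V2 x)"
  have N: "\<bar>V1 y - V2 y\<bar> \<le> N" for y
    unfolding N_def using supnorm_ge[OF bounded_diff_fun[OF b1 b2]] by simp
  obtain B1 B2 where B1: "\<And>y. \<bar>V1 y\<bar> \<le> B1" and B2: "\<And>y. \<bar>V2 y\<bar> \<le> B2"
    using bnd_abs[OF b1] bnd_abs[OF b2] by metis
  have inf_cmp: "(INF d\<in>D. Va (g d)) \<le> (INF d\<in>D. Vb (g d)) + N"
    if N': "\<And>y. Va y \<le> Vb y + N" and Ba: "\<And>y. \<bar>Va y\<bar> \<le> Ba"
    for Va Vb :: "'x \<Rightarrow> real" and g :: "'d \<Rightarrow> 'x" and Ba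
  proof -
    have "(INF d\<in>D. Va (g d)) - N \<le> (INF d\<in>D. Vb (g d))"
    proof (rule cINF_greatest[OF Dne])
      fix d assume "d \<in> D"
      have "(INF d\<in>D. Va (g d)) \<le> Va (g d)"
        by (rule cINF_lower[OF _ \<open>d \<in> D\<close>]) (rule bdd_belowI2[where m="-Ba"], rule abs_lo, rule Ba)
      then show "(INF d\<in>D. Va (g d)) - N \<le> Vb (g d)" using N'[of "g d"] by simp
    qed
    then show ?thesis by simp
  qed
  have infb: "\<bar>INF d\<in>D. Va (g d)\<bar> \<le> Ba"
    if Ba: "\<And>y. \<bar>Va y\<bar> \<le> Ba" for Va :: "'x \<Rightarrow> real" and g :: "'d \<Rightarrow> 'x" and Ba
  proof -
    obtain d where d: "d \<in> D" using Dne by blast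
    have "(INF d\<in>D. Va (g d)) \<le> Va (g d)"
      by (rule cINF_lower[OF _ d]) (rule bdd_belowI2[where m="-Ba"], rule abs_lo, rule Ba)
    moreover have "-Ba \<le> (INF d\<in>D. Va (g d))"
      by (rule cINF_greatest[OF Dne]) (rule abs_lo, rule Ba)
    ultimately show ?thesis using Ba[of "g d"] by (simp add: abs_le_iff)
  qed
  have sup_cmp: "(SUP u\<in>U. a u) \<le> (SUP u\<in>U. b u) + N"
    if ab: "\<And>u. a u \<le> b u + N" and Ba: "\<And>u. \<bar>a u\<bar> \<le> Ba" and Bb: "\<And>u. \<bar>b u\<bar> \<le> Bb"
    for a b :: "'u \<Rightarrow> real" and Ba Bb
  proof -
    have "(SUP u\<in>U. a u) \<le> (SUP u\<in>U. b u) + N"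
    proof (rule cSUP_least[OF Une])
      fix u assume "u \<in> U"
      have "b u \<le> (SUP u\<in>U. b u)"
        by (rule cSUP_upper[OF \<open>u \<in> U\<close>]) (rule bdd_aboveI2[where M=Bb], rule abs_hi, rule Bb)
      then show "a u \<le> (SUP u\<in>U. b u) + N" using ab[of u] by simp
    qed
    then show ?thesis .
  qed
  have "\<bar>bellman f U D \<gamma> r c V1 x - bellman f U D \<gamma> r c V2 x\<bar> \<le> \<gamma> * N" for x
  proof -
    define a where "a u = (INF d\<in>D. V1 (f x u d))" for u
    define b where "b u = (INF d\<in>D. V2 (f x u d))" for u
    have "V1 y \<le> V2 y + N" "V2 y \<le> V1 y + N" for y using N[of y] by (auto simp: abs_le_iff)
    then have ab: "a u \<le> b u + N" "b u \<le> a u + N" for u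
      unfolding a_def b_def by (auto intro!: inf_cmp[OF _ B1] inf_cmp[OF _ B2])
    have ba: "\<bar>a u\<bar> \<le> B1" "\<bar>b u\<bar> \<le> B2" for u unfolding a_def b_def by (auto intro!: infb B1 B2)
    have "(SUP u\<in>U. a u) \<le> (SUP u\<in>U. b u) + N" "(SUP u\<in>U. b u) \<le> (SUP u\<in>U. a u) + N"
      by (rule sup_cmp[OF ab(1) ba(1) ba(2)], rule sup_cmp[OF ab(2) ba(2) ba(1)])
    then have s: "\<bar>(SUP u\<in>U. a u) - (SUP u\<in>U. b u)\<bar> \<le> N" by (simp add: abs_le_iff)
    have "\<bar>bellman f U D \<gamma> r c V1 x - bellman f U D \<gamma> r c V2 x\<bar>
        = \<bar>G \<gamma> r c x (SUP u\<in>U. a u) - G \<gamma> r c x (SUP u\<in>U. b u)\<bar>"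
      by (simp add: bellman_def G_def a_def b_def)
    also have "\<dots> \<le> \<gamma> * \<bar>(SUP u\<in>U. a u) - (SUP u\<in>U. b u)\<bar>" by (rule G_lip[OF g0])
    also have "\<dots> \<le> \<gamma> * N" by (rule mult_left_mono[OF s g0])
    finally show ?thesis .
  qed
  then have "supnorm (\<lambda>x. bellman f U D \<gamma> r c V1 x - bellman f U D \<gamma> r c V2 x) \<le> \<gamma> * N"
    unfolding supnorm_def by (intro cSUP_least) auto
  then show ?thesis by (simp add: N_def)
qed


theorem theorem2:
  fixes f :: "real^'n \<Rightarrow> real^'m \<Rightarrow> real^'l \<Rightarrow> real^'n"
    and U :: "(real^'m) set" and D :: "(real^'l) set"
    and r c :: "real^'n \<Rightarrow> real" and \<gamma> :: real
  assumes "compact U" "U \<noteq> {}" "compact D" "D \<noteq> {}"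
    and "\<exists>L. \<forall>u\<in>U. \<forall>d\<in>D. L-lipschitz_on UNIV (\<lambda>x. f x u d)"
    and "bounded (range r)" "\<exists>L. L-lipschitz_on UNIV r"
    and "bounded (range c)" "\<exists>L. L-lipschitz_on UNIV c"
    and "0 \<le> \<gamma>" "\<gamma> < 1"
  shows "bounded (range (value_fun f U D \<gamma> r c))
       \<and> value_fun f U D \<gamma> r c = bellman f U D \<gamma> r c (value_fun f U D \<gamma> r c)
       \<and> (\<forall>W. bounded (range W) \<and> W = bellman f U D \<gamma> r c W \<longrightarrow> W = value_fun f U D \<gamma> r c)
       \<and> (\<forall>V1 V2. bounded (range V1) \<and> bounded (range V2) \<longrightarrow>
            supnorm (\<lambda>x. bellman f U D \<gamma> r c V1 x - bellman f U D \<gamma> r c V2 x)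
              \<le> \<gamma> * supnorm (\<lambda>x. V1 x - V2 x))"
proof -
  obtain Br where Br: "\<And>y. \<bar>r y\<bar> \<le> Br" using bnd_abs[OF assms(6)] by blast
  obtain Bc where Bc: "\<And>y. \<bar>c y\<bar> \<le> Bc" using bnd_abs[OF assms(8)] by blast
  define M where "M = max Br Bc"
  interpret game f U D \<gamma> r c M
  proof
    show "U \<noteq> {}" "D \<noteq> {}" "0 \<le> \<gamma>" "\<gamma> < 1" using assms by auto
    show "\<bar>r y\<bar> \<le> M" for y using Br[of y] by (simp add: M_def)
    show "\<bar>c y\<bar> \<le> M" for y using Bc[of y] by (simp add: M_def)
  qed
  let ?B = "bellman f U D \<gamma> r c"
  have bV: "bounded (range V)"
    unfolding bounded_iff using Vb by auto
  have fixV: "V = ?B V" using V_fix by (rule ext)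
  have contr: "\<forall>V1 V2. bounded (range V1) \<and> bounded (range V2) \<longrightarrow>
            supnorm (\<lambda>x. ?B V1 x - ?B V2 x) \<le> \<gamma> * supnorm (\<lambda>x. V1 x - V2 x)"
    using contraction[OF Une Dne g0] by blast
  have uniq: "\<forall>W. bounded (range W) \<and> W = ?B W \<longrightarrow> W = V"
  proof (intro allI impI)
    fix W assume hW: "bounded (range W) \<and> W = ?B W"
    have e1: "W x = ?B W x" for x using fun_cong[OF conjunct2[OF hW]] .
    have e2: "V x = ?B V x" for x using V_fix .
    define s where "s = supnorm (\<lambda>x. W x - V x)"
    have "(\<lambda>x. W x - V x) = (\<lambda>x. ?B W x - ?B V x)" by (simp only: e1[symmetric] e2[symmetric])
    then have "s \<le> \<gamma> * s" unfolding s_def using contr conjunct1[OF hW] bV by metis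
    moreover have pt: "\<bar>W x - V x\<bar> \<le> s" for x
      unfolding s_def using supnorm_ge[OF bounded_diff_fun[OF conjunct1[OF hW] bV]] by simp
    then have "0 \<le> s" by (meson abs_ge_zero order_trans)
    ultimately have "s \<le> 0"
    proof -
      assume "s \<le> \<gamma> * s" "0 \<le> s"
      show "s \<le> 0"
      proof (rule ccontr)
        assume "\<not> s \<le> 0"
        then have "\<gamma> * s < 1 * s" using g1 by (intro mult_strict_right_mono) auto
        then show False using \<open>s \<le> \<gamma> * s\<close> by simp
      qed
    qed
    then show "W = V" using pt by (intro ext) (metis abs_le_zero_iff eq_iff_diff_eq_0 order_trans)
  qed
  show ?thesis using bV fixV uniq contr by blast
qed

end
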